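(* Let $X$ be a non-trivial vector space over a field $\mathbb{k}$ and let $T:X\to X$ be a linear map with no non-trivial finite dimensional invariant subspaces. Then for any finite dimensional subspace $L$ of $X$, there is $m=m(L)\in\mathbb{N}$ such that $p(T)(L)\cap L=\{0\}$ for every polynomial $p\in\mathbb{k}[t]$ with $\deg p\geq m$.
   Context: A non-trivial space/subspace means one different from $\{0\}$; a subspace $L$ is invariant for $T$ if $T(L)\subseteq L$. *)

theory Defs
  imports Main "HOL-Computational_Algebra.Polynomial"
begin

definition poly_op :: "('k::field \<Rightarrow> 'v::ab_group_add \<Rightarrow> 'v) \<Rightarrow> 'k poly \<Rightarrow> ('v \<Rightarrow> 'v) \<Rightarrow> 'v \<Rightarrow> 'v"
  where "poly_op scale p T = (\<lambda>x. \<Sum>i\<le>degree p. scale (coeff p i) ((T ^^ i) x))"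

definition fin_dim_subspace :: "('k::field \<Rightarrow> 'v::ab_group_add \<Rightarrow> 'v) \<Rightarrow> 'v set \<Rightarrow> bool"
  where "fin_dim_subspace scale L \<longleftrightarrow> module.subspace scale L \<and> (\<exists>B. finite B \<and> module.span scale B = L)"

end

theory Submission
  imports Defs
begin

locale l15 = vector_space scale for scale :: "'k::field \<Rightarrow> 'v::ab_group_add \<Rightarrow> 'v" +
  fixes T :: "'v \<Rightarrow> 'v" and L :: "'v set" and B0 :: "'v set"
  assumes linT: "Vector_Spaces.linear scale scale T"
    and no_inv: "\<And>M. fin_dim_subspace scale M \<Longrightarrow> T ` M \<subseteq> M \<Longrightarrow> M = {0}"
    and finB0: "finite B0" and spanB0: "span B0 = L"
begin

lemma linTp: "Vector_Spaces.linear scale scale (T^^i)"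
proof (induction i)
  case 0 then show ?case using linear_id by (simp add: id_def)
next
  case (Suc i)
  have "T^^Suc i = T o T^^i" by simp
  then show ?case using Vector_Spaces.linear_compose[OF Suc linT] by metis
qed

lemma homTp: "module_hom scale scale (T^^i)"
  using linTp module_hom_iff_linear by blast

lemma Tp_span: "(T^^i) ` span S = span ((T^^i) ` S)"
  using module_hom.span_image[OF homTp] by metis

lemma Tp_add: "(T^^i) (x + y) = (T^^i) x + (T^^i) y"
  using module_hom.add[OF homTp] by metis

lemma Tp_scale: "(T^^i) (scale c x) = scale c ((T^^i) x)"
  using module_hom.scale[OF homTp] by metis

lemma Tp_zero: "(T^^i) 0 = 0"
  using module_hom.zero[OF homTp] by metis

lemma T_span: "T ` span S = span (T ` S)"
  using Tp_span[of 1] by simp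

definition V :: "nat \<Rightarrow> 'v set" where "V j = span (\<Union>i\<le>j. (T^^i) ` L)"

lemma subspace_L: "subspace L" using spanB0 subspace_span by blast

lemma V_sub: "subspace (V j)" unfolding V_def by simp

lemma V_mono: "i \<le> j \<Longrightarrow> V i \<subseteq> V j"
  unfolding V_def by (rule span_mono, rule UN_mono) auto

lemma L_V0: "L \<subseteq> V 0"
  unfolding V_def using span_superset by fastforce

lemma L_V: "L \<subseteq> V j"
  using L_V0 V_mono by blast

lemma V_fin: "V j = span (\<Union>i\<le>j. (T^^i) ` B0)"
proof -
  have "(\<Union>i\<le>j. (T^^i) ` L) = (\<Union>i\<le>j. span ((T^^i) ` B0))"
    unfolding spanB0[symmetric] Tp_span ..
  moreover have "span (\<Union>i\<le>j. span ((T^^i) ` B0)) = span (\<Union>i\<le>j. (T^^i) ` B0)"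
    unfolding span_eq
  proof
    show "(\<Union>i\<le>j. span ((T^^i) ` B0)) \<subseteq> span (\<Union>i\<le>j. (T^^i) ` B0)"
      by (rule UN_least, rule span_mono) auto
    have "(\<Union>i\<le>j. (T^^i) ` B0) \<subseteq> (\<Union>i\<le>j. span ((T^^i) ` B0))"
      by (rule UN_mono) (auto simp: span_superset)
    also have "\<dots> \<subseteq> span (\<Union>i\<le>j. span ((T^^i) ` B0))" by (rule span_superset)
    finally show "(\<Union>i\<le>j. (T^^i) ` B0) \<subseteq> span (\<Union>i\<le>j. span ((T^^i) ` B0))" .
  qed
  ultimately show ?thesis unfolding V_def by simp
qed

lemma V_Suc_T: "T ` V j \<subseteq> V (Suc j)"
proof -
  have "T ` V j = span (T ` (\<Union>i\<le>j. (T^^i) ` L))" unfolding V_def T_span ..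
  also have "\<dots> \<subseteq> V (Suc j)" unfolding V_def
  proof (rule span_mono, clarify)
    fix i y assume "i \<le> j" "y \<in> L"
    then have "Suc i \<in> {..Suc j}" by simp
    moreover have "T ((T^^i) y) \<in> (T^^Suc i) ` L" using \<open>y \<in> L\<close> by simp
    ultimately show "T ((T^^i) y) \<in> (\<Union>i\<le>Suc j. (T^^i) ` L)" by (rule UN_I)
  qed
  finally show ?thesis .
qed

lemma Tp_in: "x \<in> V j \<Longrightarrow> (T^^k) x \<in> V (j + k)"
proof (induction k)
  case 0 then show ?case by simp
next
  case (Suc k)
  then have "T ((T^^k) x) \<in> V (Suc (j + k))" using V_Suc_T by blast
  then show ?case by simp
qed

lemma V_Suc_sub: "V (Suc j) \<subseteq> span (L \<union> T ` V j)"
proof -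
  have "(\<Union>i\<le>Suc j. (T^^i) ` L) \<subseteq> L \<union> T ` V j"
  proof
    fix z assume "z \<in> (\<Union>i\<le>Suc j. (T^^i) ` L)"
    then obtain i y where i: "i \<le> Suc j" and y: "y \<in> L" and z: "z = (T^^i) y" by blast
    show "z \<in> L \<union> T ` V j"
    proof (cases i)
      case 0 then show ?thesis using y z by simp
    next
      case (Suc i')
      have "(T^^i') y \<in> V (0 + i')" by (rule Tp_in[OF subsetD[OF L_V0 y]])
      then have "(T^^i') y \<in> V j" using V_mono[of i' j] i Suc by auto
      then have "T ((T^^i') y) \<in> T ` V j" by blast
      moreover have "z = T ((T^^i') y)" using Suc z by simp
      ultimately show ?thesis by simp
    qed
  qed
  then show ?thesis unfolding V_def[of "Suc j"] by (rule span_mono)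
qed

lemma V_findim: "\<exists>F. finite F \<and> V j = span F"
proof
  show "finite (\<Union>i\<le>j. (T^^i) ` B0) \<and> V j = span (\<Union>i\<le>j. (T^^i) ` B0)"
    using V_fin finB0 by simp
qed

lemma dim_step:
  assumes ind: "independent S0" and S0: "S0 \<subseteq> V (Suc j)" and TS0: "T ` S0 \<subseteq> V (Suc j)"
  shows "dim (V (Suc (Suc j))) + card S0 \<le> 2 * dim (V (Suc j))"
    and "card S0 \<le> dim (V (Suc j))" and "finite S0"
proof -
  let ?Y = "V (Suc j)"
  obtain BY where BY: "S0 \<subseteq> BY" "BY \<subseteq> ?Y" "independent BY" "?Y \<subseteq> span BY"
    using maximal_independent_subset_extend[OF S0 ind] by blast
  have cBY: "card BY = dim ?Y" using basis_card_eq_dim BY by blast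
  obtain F where F: "finite F" "?Y = span F" using V_findim by blast
  have "BY \<subseteq> span F" using BY(2) F(2) by simp
  then have fBY: "finite BY" using independent_span_bound[OF F(1) BY(3)] by simp
  then show fS0: "finite S0" using BY(1) finite_subset by blast
  have c1: "card S0 \<le> card BY" using card_mono[OF fBY BY(1)] .
  then show "card S0 \<le> dim ?Y" using cBY by simp
  define E where "E = BY - S0"
  have cE: "card E = card BY - card S0" unfolding E_def using card_Diff_subset[OF fS0 BY(1)] .
  let ?G = "BY \<union> T ` E"
  have YG: "?Y \<subseteq> span ?G" using BY(4) span_mono[of BY ?G] by blast
  have "T ` ?Y \<subseteq> T ` span BY" by (rule image_mono[OF BY(4)])
  also have "\<dots> = span (T ` BY)" by (rule T_span)
  also have "span (T ` BY) \<subseteq> span ?G"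
  proof (rule span_minimal)
    show "subspace (span ?G)" by simp
    have "T ` BY \<subseteq> T ` S0 \<union> T ` E" unfolding E_def by auto
    also have "\<dots> \<subseteq> span ?G"
    proof -
      have "T ` S0 \<subseteq> span ?G" using TS0 YG by (rule order_trans)
      moreover have "T ` E \<subseteq> span ?G" using span_superset[of ?G] by auto
      ultimately show ?thesis by (rule Un_least)
    qed
    finally show "T ` BY \<subseteq> span ?G" .
  qed
  finally have "T ` ?Y \<subseteq> span ?G" .
  moreover have "L \<subseteq> span ?G" using L_V[of "Suc j"] YG by (rule order_trans)
  ultimately have "L \<union> T ` ?Y \<subseteq> span ?G" by (rule Un_least[rotated])
  then have "span (L \<union> T ` ?Y) \<subseteq> span ?G" by (simp add: span_minimal)
  then have "V (Suc (Suc j)) \<subseteq> span ?G" using V_Suc_sub[of "Suc j"] by blast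
  moreover have "finite ?G" using fBY E_def by auto
  ultimately have "dim (V (Suc (Suc j))) \<le> card ?G" using dim_le_card by blast
  also have "\<dots> \<le> card BY + card (T ` E)" by (rule card_Un_le)
  also have "\<dots> \<le> card BY + card E" using card_image_le[of "BY - S0" T] fBY by (simp add: E_def)
  finally show "dim (V (Suc (Suc j))) + card S0 \<le> 2 * dim ?Y" using cE c1 cBY by simp
qed

lemma basis_V: obtains BS where "BS \<subseteq> V j" "independent BS" "span BS = V j" "card BS = dim (V j)" "finite BS"
proof -
  obtain BS where BS: "BS \<subseteq> V j" "independent BS" "V j \<subseteq> span BS" "card BS = dim (V j)"
    using basis_exists by blast
  have "span BS \<subseteq> V j" using BS(1) V_sub span_minimal by blast
  moreover obtain F where F: "finite F" "V j = span F" using V_findim by blast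
  moreover have "BS \<subseteq> span F" using BS(1) F(2) by simp
  ultimately show ?thesis using that[OF BS(1,2) _ BS(4)] BS(3) independent_span_bound[OF F(1) BS(2)] by auto
qed

lemma dim_ineq: "dim (V (Suc (Suc j))) + dim (V j) \<le> 2 * dim (V (Suc j))"
  and dim_mono1: "dim (V j) \<le> dim (V (Suc j))"
proof -
  obtain BS where BS: "BS \<subseteq> V j" "independent BS" "span BS = V j" "card BS = dim (V j)"
    using basis_V by metis
  have a: "BS \<subseteq> V (Suc j)" using BS(1) V_mono[of j "Suc j"] by auto
  have b: "T ` BS \<subseteq> V (Suc j)" using BS(1) V_Suc_T by blast
  show "dim (V (Suc (Suc j))) + dim (V j) \<le> 2 * dim (V (Suc j))"
    using dim_step(1)[OF BS(2) a b] BS(4) by simp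
  show "dim (V j) \<le> dim (V (Suc j))"
    using dim_step(2)[OF BS(2) a b] BS(4) by simp
qed

definition \<delta> where "\<delta> j = dim (V (Suc j)) - dim (V j)"

lemma delta_dec: "\<delta> (Suc j) \<le> \<delta> j"
  using dim_ineq[of j] dim_mono1[of j] dim_mono1[of "Suc j"] unfolding \<delta>_def by linarith

lemma delta_stable: obtains j0 where "\<And>j. j \<ge> j0 \<Longrightarrow> \<delta> j = \<delta> j0"
proof -
  define k where "k = (LEAST k. \<exists>j. \<delta> j = k)"
  have "\<exists>j. \<delta> j = k" unfolding k_def by (rule LeastI_ex) blast
  then obtain j0 where j0: "\<delta> j0 = k" by blast
  have "\<delta> j = \<delta> j0" if "j \<ge> j0" for j
  proof -
    have "\<delta> j \<le> \<delta> j0" using lift_Suc_antimono_le[of \<delta>, OF delta_dec that] .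
    moreover have "k \<le> \<delta> j" unfolding k_def by (rule Least_le) blast
    ultimately show ?thesis using j0 by simp
  qed
  then show ?thesis using that by blast
qed

lemma no_bad:
  assumes j0: "\<And>j. j \<ge> j0 \<Longrightarrow> \<delta> j = \<delta> j0" and j: "j \<ge> j0"
    and v1: "v \<in> V (Suc j)" and v2: "v \<notin> V j"
  shows "T v \<notin> V (Suc j)"
proof
  assume Tv: "T v \<in> V (Suc j)"
  obtain BS where BS: "BS \<subseteq> V j" "independent BS" "span BS = V j" "card BS = dim (V j)" "finite BS"
    using basis_V by metis
  have vBS: "v \<notin> BS" using BS(1) v2 by blast
  have ind: "independent (insert v BS)" using BS(2,3) v2 vBS by (simp add: independent_insert)
  have a: "insert v BS \<subseteq> V (Suc j)" using BS(1) V_mono[of j "Suc j"] v1 by auto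
  have b: "T ` insert v BS \<subseteq> V (Suc j)" using BS(1) V_Suc_T Tv by blast
  have c: "card (insert v BS) = dim (V j) + 1" using BS(4,5) vBS by simp
  have "dim (V (Suc (Suc j))) + dim (V j) + 1 \<le> 2 * dim (V (Suc j))"
    using dim_step(1)[OF ind a b] c by simp
  moreover have "\<delta> (Suc j) = \<delta> j" using j0[of j] j0[of "Suc j"] j by simp
  ultimately show False
    using dim_mono1[of j] dim_mono1[of "Suc j"] unfolding \<delta>_def by linarith
qed

lemma grow:
  assumes j0: "\<And>j. j \<ge> j0 \<Longrightarrow> \<delta> j = \<delta> j0" and j: "j \<ge> j0"
    and v1: "v \<in> V (Suc j)" and v2: "v \<notin> V j"
  shows "(T^^k) v \<in> V (Suc j + k) \<and> (T^^k) v \<notin> V (j + k)"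
proof (induction k)
  case 0 then show ?case using v1 v2 by simp
next
  case (Suc k)
  have jk: "j + k \<ge> j0" using j by simp
  have w1: "(T^^k) v \<in> V (Suc (j + k))" and w2: "(T^^k) v \<notin> V (j + k)" using Suc by simp_all
  have "T ((T^^k) v) \<notin> V (Suc (j + k))" by (rule no_bad[OF j0 jk w1 w2])
  moreover have "T ((T^^k) v) \<in> V (Suc (Suc (j + k)))" using w1 V_Suc_T by blast
  ultimately show ?case by simp
qed

lemma indep_orbit:
  assumes x: "x \<noteq> 0"
  shows "independent ((\<lambda>i. (T^^i) x) ` {..<k}) \<and> card ((\<lambda>i. (T^^i) x) ` {..<k}) = k"
proof (induction k)
  case 0
  show ?case by (simp add: independent_empty)
next
  case (Suc k)
  let ?O = "(\<lambda>i. (T^^i) x) ` {..<k}"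
  have ins: "(\<lambda>i. (T^^i) x) ` {..<Suc k} = insert ((T^^k) x) ?O"
    by (simp add: lessThan_Suc)
  have notin: "(T^^k) x \<notin> span ?O"
  proof
    assume h: "(T^^k) x \<in> span ?O"
    let ?M = "span ?O"
    have fd: "fin_dim_subspace scale ?M" unfolding fin_dim_subspace_def
    proof (intro conjI exI[of _ ?O])
      show "subspace ?M" by (rule subspace_span)
      show "finite ?O" by simp
    qed (rule refl)
    have "T ` ?O \<subseteq> ?M"
    proof
      fix z assume "z \<in> T ` ?O"
      then obtain i where i: "i < k" and z: "z = T ((T^^i) x)" by blast
      have z': "z = (T^^Suc i) x" using z by simp
      show "z \<in> ?M"
      proof (cases "Suc i < k")
        case True
        then have "(T^^Suc i) x \<in> ?O" by (intro imageI) simp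
        then show ?thesis using z' subsetD[OF span_superset] by simp
      next
        case False then have "Suc i = k" using i by simp
        then show ?thesis using z' h by simp
      qed
    qed
    then have "span (T ` ?O) \<subseteq> ?M" by (rule span_minimal) (rule subspace_span)
    then have "T ` ?M \<subseteq> ?M" by (simp only: T_span)
    then have M0: "?M = {0}" by (rule no_inv[OF fd])
    have "x \<in> ?M"
    proof (cases k)
      case 0 then show ?thesis using h by simp
    next
      case (Suc k')
      then have "(T^^0) x \<in> ?O" by (intro imageI) simp
      then have "x \<in> ?O" by simp
      then show ?thesis using subsetD[OF span_superset] by simp
    qed
    then show False using M0 x by simp
  qed
  have nO: "(T^^k) x \<notin> ?O"
  proof
    assume "(T^^k) x \<in> ?O"
    then have "(T^^k) x \<in> span ?O" by (rule span_base)
    with notin show False by contradiction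
  qed
  have fO: "finite ?O" by simp
  have "independent (insert ((T^^k) x) ?O)"
    by (rule independent_insertI[OF notin conjunct1[OF Suc.IH]])
  moreover have "card (insert ((T^^k) x) ?O) = Suc k"
    using card_insert_disjoint[OF fO nO] conjunct2[OF Suc.IH] by simp
  ultimately show ?case unfolding ins by simp
qed

lemma orbit_exit:
  assumes x: "x \<noteq> 0"
  shows "\<exists>i \<le> dim (V j). (T^^i) x \<notin> V j"
proof (rule ccontr)
  assume "\<not> ?thesis"
  then have sub: "(\<lambda>i. (T^^i) x) ` {..<Suc (dim (V j))} \<subseteq> V j" by auto
  obtain BS where BS: "BS \<subseteq> V j" "independent BS" "span BS = V j" "card BS = dim (V j)" "finite BS"
    using basis_V by metis
  have "card ((\<lambda>i. (T^^i) x) ` {..<Suc (dim (V j))}) \<le> card BS"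
    using independent_span_bound[OF BS(5) conjunct1[OF indep_orbit[OF x]]] sub BS(3) by simp
  then show False using conjunct2[OF indep_orbit[OF x]] BS(4) by simp
qed

lemma poly_op_0: "poly_op scale p T 0 = 0"
  unfolding poly_op_def by (simp add: Tp_zero)

lemma poly_op_split: "poly_op scale p T x =
  (\<Sum>i<degree p. scale (coeff p i) ((T^^i) x)) + scale (coeff p (degree p)) ((T^^degree p) x)"
  unfolding poly_op_def lessThan_Suc_atMost[symmetric] sum.lessThan_Suc ..

lemma main: "\<exists>m::nat. \<forall>p :: 'k poly. degree p \<ge> m \<longrightarrow> poly_op scale p T ` L \<inter> L = {0}"
proof -
  obtain j0 where j0: "\<And>j. j \<ge> j0 \<Longrightarrow> \<delta> j = \<delta> j0" using delta_stable by blast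
  define A where "A = dim (V j0)"
  show ?thesis
  proof (intro exI[of _ A] allI impI)
    fix p :: "'k poly" assume dp: "degree p \<ge> A"
    show "poly_op scale p T ` L \<inter> L = {0}"
    proof
      have "0 \<in> L" using subspace_L subspace_0 by blast
      then show "{0} \<subseteq> poly_op scale p T ` L \<inter> L" using poly_op_0 by force
    next
      show "poly_op scale p T ` L \<inter> L \<subseteq> {0}"
      proof
        fix y assume "y \<in> poly_op scale p T ` L \<inter> L"
        then obtain x where xL: "x \<in> L" and y: "y = poly_op scale p T x" and yL: "y \<in> L" by blast
        show "y \<in> {0}"
        proof (rule ccontr)
          assume yn: "y \<notin> {0}"
          have x0: "x \<noteq> 0" using yn y poly_op_0 by auto
          have p0: "p \<noteq> 0" using yn y unfolding poly_op_def by auto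
          obtain iw where iw: "iw \<le> A" "(T^^iw) x \<notin> V j0" using orbit_exit[OF x0] A_def by blast
          define i0 where "i0 = (LEAST i. (T^^i) x \<notin> V j0)"
          have i0a: "(T^^i0) x \<notin> V j0" unfolding i0_def by (rule LeastI[of _ iw]) (rule iw(2))
          have i0b: "\<And>i. i < i0 \<Longrightarrow> (T^^i) x \<in> V j0" unfolding i0_def using not_less_Least by blast
          have i0c: "i0 \<le> iw" unfolding i0_def by (rule Least_le) (rule iw(2))
          define v where "v = (T^^i0) x"
          have vin: "v \<in> V i0" unfolding v_def using Tp_in[OF subsetD[OF L_V0 xL], of i0] by simp
          define e where "e = (LEAST e. v \<in> V e)"
          have ve: "v \<in> V e" unfolding e_def by (rule LeastI[of _ i0]) (rule vin)
          have ve2: "\<And>e'. e' < e \<Longrightarrow> v \<notin> V e'" unfolding e_def using not_less_Least by blast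
          have "e > j0"
          proof (rule ccontr)
            assume "\<not> e > j0"
            then have "V e \<subseteq> V j0" using V_mono by simp
            then show False using ve i0a v_def by blast
          qed
          then obtain j where ej: "e = Suc j" and jj0: "j \<ge> j0" by (cases e) auto
          have v1: "v \<in> V (Suc j)" using ve ej by simp
          have v2: "v \<notin> V j" using ve2 ej by simp
          note gr = grow[OF j0 jj0 v1 v2]
          define d where "d = degree p"
          have i0d: "i0 \<le> d" using i0c iw(1) dp d_def by simp
          define W where "W = V (j + (d - i0))"
          have sW: "subspace W" unfolding W_def by (rule V_sub)
          have Tx: "(T^^i) x = (T^^(i - i0)) v" if "i \<ge> i0" for i
          proof -
            have "(T^^i) x = (T^^(i - i0) o T^^i0) x" using that funpow_add[of "i - i0" i0 T] by simp
            then show ?thesis unfolding v_def by simp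
          qed
          have terms: "(T^^i) x \<in> W" if "i < d" for i
          proof (cases "i < i0")
            case True
            then show ?thesis using i0b V_mono[of j0 "j + (d - i0)"] jj0 unfolding W_def by auto
          next
            case False
            have "(T^^i) x = (T^^(i-i0)) v" using Tx False by simp
            moreover have "(T^^(i-i0)) v \<in> V (Suc j + (i - i0))" by (rule conjunct1[OF gr])
            ultimately have "(T^^i) x \<in> V (Suc j + (i - i0))" by simp
            moreover have "Suc j + (i - i0) \<le> j + (d - i0)" using False that by simp
            ultimately show ?thesis using V_mono unfolding W_def by blast
          qed
          have sum_in: "(\<Sum>i<d. scale (coeff p i) ((T^^i) x)) \<in> W"
            by (rule subspace_sum[OF sW]) (simp add: subspace_scale[OF sW] terms)
          have last: "(T^^d) x \<notin> W" using Tx[OF i0d] gr unfolding W_def by simp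
          have c0: "coeff p d \<noteq> 0" using p0 d_def by simp
          have "y \<in> W" using yL L_V unfolding W_def by blast
          then have "scale (coeff p d) ((T^^d) x) \<in> W"
            using subspace_diff[OF sW _ sum_in, of y] poly_op_split[of p x] y d_def by simp
          then have "scale (inverse (coeff p d)) (scale (coeff p d) ((T^^d) x)) \<in> W"
            using subspace_scale[OF sW] by blast
          then have "(T^^d) x \<in> W" using c0 by simp
          then show False using last by simp
        qed
      qed
    qed
  qed
qed

end

theorem lemma1p5:
  fixes scale :: "'k::field \<Rightarrow> 'v::ab_group_add \<Rightarrow> 'v"
    and T :: "'v \<Rightarrow> 'v"
    and L :: "'v set"
  assumes vs: "vector_space scale"
    and nontriv: "(UNIV :: 'v set) \<noteq> {0}"
    and lin: "Vector_Spaces.linear scale scale T"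
    and no_inv: "\<And>M. fin_dim_subspace scale M \<Longrightarrow> T ` M \<subseteq> M \<Longrightarrow> M = {0}"
    and L: "fin_dim_subspace scale L"
  shows "\<exists>m::nat. \<forall>p :: 'k poly. degree p \<ge> m \<longrightarrow> poly_op scale p T ` L \<inter> L = {0}"
proof -
  interpret vector_space scale by (rule vs)
  obtain B where B: "finite B" "module.span scale B = L" using L unfolding fin_dim_subspace_def by blast
  interpret l15 scale T L B
    using vs lin no_inv B unfolding l15_def l15_axioms_def by blast
  show ?thesis by (rule main)
qed

end
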